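(* Let $K\subset\mathbb{R}^n$ be a closed convex set. For every $\varepsilon\ge0$, the map $\nu\mapsto w_\nu(\varepsilon)$ is concave on $K$.
   Context: $w_\nu(\varepsilon)=\mathbb{E}\sup_{t\in B(\nu,\varepsilon)\cap K}\langle x,t\rangle$ with $x\sim N(0,\mathbb{I}_n)$ and $B(\nu,\varepsilon)$ the closed Euclidean ball of radius $\varepsilon$ around $\nu$. *)

theory Defs
  imports "HOL-Probability.Probability"
begin

definition std_gaussian :: "'a::euclidean_space measure" where
  "std_gaussian = density lborel
     (\<lambda>x. ennreal ((2 * pi) powr (- real DIM('a) / 2) * exp (- (norm x)\<^sup>2 / 2)))"

definition local_gauss_width :: "'a::euclidean_space set \<Rightarrow> 'a \<Rightarrow> real \<Rightarrow> real" where
  "local_gauss_width K \<nu> \<epsilon> =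
     (\<integral>x. (SUP t \<in> cball \<nu> \<epsilon> \<inter> K. x \<bullet> t) \<partial>std_gaussian)"

end

theory Submission imports Defs begin


lemma sum_le_prod1:
  fixes a :: "'b \<Rightarrow> real"
  assumes "finite A" "\<And>i. i \<in> A \<Longrightarrow> 0 \<le> a i"
  shows "sum a A \<le> (\<Prod>i\<in>A. 1 + a i)"
  using assms
proof (induction A rule: finite_induct)
  case empty then show ?case by simp
next
  case (insert x F)
  have h: "sum a F \<le> (\<Prod>i\<in>F. 1 + a i)" "0 \<le> a x" "1 \<le> (\<Prod>i\<in>F. 1 + a i)"
    using insert by (auto intro: prod_ge_1)
  have "a x + sum a F \<le> (1 + a x) * (\<Prod>i\<in>F. 1 + a i)"
  proof -
    have "a x * 1 \<le> a x * (\<Prod>i\<in>F. 1 + a i)" using h by (intro mult_left_mono) auto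
    then show ?thesis using h by (simp add: algebra_simps)
  qed
  then show ?case using insert by simp
qed

definition hh :: "real \<Rightarrow> real" where "hh t = (1 + \<bar>t\<bar>) * exp (- t\<^sup>2 / 2)"

lemma hh_integrable: "integrable lborel hh"
proof -
  have "integrable lborel (\<lambda>t. sqrt (2*pi) * (std_normal_density t * \<bar>t\<bar>^0 + std_normal_density t * \<bar>t\<bar>^1))"
    by (intro integrable_mult_right Bochner_Integration.integrable_add[OF integrable_std_normal_moment_abs integrable_std_normal_moment_abs])
  also have "(\<lambda>t. sqrt (2*pi) * (std_normal_density t * \<bar>t\<bar>^0 + std_normal_density t * \<bar>t\<bar>^1)) = hh"
    by (auto simp: hh_def std_normal_density_def fun_eq_iff algebra_simps)
  finally show ?thesis .
qed

lemma hh_nonneg: "0 \<le> hh t" by (simp add: hh_def)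

lemma hh_nn_finite: "(\<integral>\<^sup>+t. ennreal (hh t) \<partial>lborel) < \<infinity>"
  using nn_integral_eq_integral[OF hh_integrable] hh_nonneg by simp

lemma hh_meas[measurable]: "hh \<in> borel_measurable borel"
  unfolding hh_def by measurable

lemma norm_exp_bound:
  fixes x :: "'a::euclidean_space"
  shows "exp (- (norm x)\<^sup>2 / 2) * norm x \<le> (\<Prod>b\<in>Basis. hh (x \<bullet> b))"
proof -
  have "(norm x)\<^sup>2 = (\<Sum>b\<in>Basis. (x \<bullet> b)\<^sup>2)"
  proof -
    have "(norm x)\<^sup>2 = x \<bullet> x" by (simp add: power2_norm_eq_inner)
    also have "\<dots> = (\<Sum>b\<in>Basis. (x \<bullet> b) * (x \<bullet> b))" by (rule euclidean_inner)
    finally show ?thesis by (simp add: power2_eq_square)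
  qed
  hence e: "exp (- (norm x)\<^sup>2 / 2) = (\<Prod>b\<in>Basis. exp (- (x \<bullet> b)\<^sup>2 / 2))"
    by (simp add: exp_sum[symmetric] sum_negf sum_divide_distrib)
  have n: "norm x \<le> (\<Prod>b\<in>Basis. 1 + \<bar>x \<bullet> b\<bar>)"
    using norm_le_l1[of x] sum_le_prod1[of Basis "\<lambda>b. \<bar>x \<bullet> b\<bar>"] by simp
  have "exp (- (norm x)\<^sup>2 / 2) * norm x \<le> exp (- (norm x)\<^sup>2 / 2) * (\<Prod>b\<in>Basis. 1 + \<bar>x \<bullet> b\<bar>)"
    using n by (simp)
  also have "\<dots> = (\<Prod>b\<in>Basis. hh (x \<bullet> b))"
    unfolding e hh_def by (simp add: prod.distrib mult.commute)
  finally show ?thesis .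
qed

lemma gauss_norm_integrable: "integrable (std_gaussian::'a::euclidean_space measure) norm"
proof -
  define c where "c = (2 * pi) powr (- real DIM('a) / 2)"
  have c0: "0 \<le> c" unfolding c_def by simp
  have "integrable lborel (\<lambda>x::'a. (c * exp (- (norm x)\<^sup>2 / 2)) *\<^sub>R norm x)"
  proof (rule integrableI_bounded)
    show "(\<lambda>x::'a. (c * exp (- (norm x)\<^sup>2 / 2)) *\<^sub>R norm x) \<in> borel_measurable lborel"
      by measurable
    have "(\<integral>\<^sup>+x. ennreal (norm ((c * exp (- (norm x)\<^sup>2 / 2)) *\<^sub>R norm (x::'a))) \<partial>lborel)
        \<le> (\<integral>\<^sup>+x. ennreal c * (\<Prod>b\<in>Basis. ennreal (hh ((x::'a) \<bullet> b))) \<partial>lborel)"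
    proof -
      have *: "ennreal (norm ((c * exp (- (norm x)\<^sup>2 / 2)) *\<^sub>R norm x)) \<le> ennreal c * (\<Prod>b\<in>Basis. ennreal (hh (x \<bullet> b)))" for x :: 'a
      proof -
      have "norm ((c * exp (- (norm x)\<^sup>2 / 2)) *\<^sub>R norm x) = c * (exp (- (norm x)\<^sup>2 / 2) * norm x)"
        using c0 by simp
      also have "\<dots> \<le> c * (\<Prod>b\<in>Basis. hh (x \<bullet> b))"
        using norm_exp_bound[of x] c0 by (simp add: mult_left_mono)
      finally show ?thesis
        using c0 hh_nonneg by (simp add: prod_ennreal ennreal_mult[symmetric] prod_nonneg)
      qed
      show ?thesis by (intro nn_integral_mono *)
    qed
    also have "\<dots> = ennreal c * (\<Prod>b\<in>(Basis::'a set). (\<integral>\<^sup>+t. ennreal (hh t) \<partial>lborel))"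
      using nn_integral_lborel_prod[where f="\<lambda>_ t. ennreal (hh t)" and 'a='a]
      by (subst nn_integral_cmult) (auto simp: hh_nonneg)
    also have "\<dots> < \<infinity>"
      using hh_nn_finite by (simp add: ennreal_mult_less_top power_less_top_ennreal less_top)
    finally show "(\<integral>\<^sup>+x. ennreal (norm ((c * exp (- (norm x)\<^sup>2 / 2)) *\<^sub>R norm (x::'a))) \<partial>lborel) < \<infinity>" .
  qed
  then show ?thesis
    unfolding std_gaussian_def c_def[symmetric]
    by (subst integrable_density) (auto simp: c0)
qed


definition sf :: "'a::euclidean_space set \<Rightarrow> 'a \<Rightarrow> real" where
  "sf S x = (SUP t\<in>S. x \<bullet> t)"

lemma sf_attained:
  fixes S :: "'a::euclidean_space set"
  assumes "compact S" "S \<noteq> {}"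
  shows "\<exists>t\<in>S. sf S x = x \<bullet> t \<and> (\<forall>s\<in>S. x \<bullet> s \<le> x \<bullet> t)"
proof -
  have "compact ((\<lambda>t. x \<bullet> t) ` S)"
    by (intro compact_continuous_image continuous_intros assms)
  then obtain m where m: "m \<in> (\<lambda>t. x \<bullet> t) ` S" "\<forall>y\<in>(\<lambda>t. x \<bullet> t) ` S. y \<le> m"
    using compact_attains_sup[of "(\<lambda>t. x \<bullet> t) ` S"] assms by blast
  then obtain t where t: "t \<in> S" "m = x \<bullet> t" by blast
  have "sf S x = m" unfolding sf_def by (rule cSup_eq_maximum) (use m in auto)
  then show ?thesis using t m by auto
qed

lemma sf_upper:
  fixes S :: "'a::euclidean_space set"
  assumes "compact S" "s \<in> S"
  shows "x \<bullet> s \<le> sf S x"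
proof -
  have "S \<noteq> {}" using assms by auto
  then obtain t where "t \<in> S" "sf S x = x \<bullet> t" "\<forall>s\<in>S. x \<bullet> s \<le> x \<bullet> t"
    using sf_attained[of S x] assms by blast
  then show ?thesis using assms by auto
qed

lemma sf_bound:
  fixes S :: "'a::euclidean_space set"
  assumes "compact S" "S \<noteq> {}" "\<And>t. t \<in> S \<Longrightarrow> norm t \<le> R"
  shows "\<bar>sf S x\<bar> \<le> R * norm x"
proof -
  obtain t where t: "t \<in> S" "sf S x = x \<bullet> t"
    using sf_attained[OF assms(1,2), of x] by auto
  have "\<bar>x \<bullet> t\<bar> \<le> norm x * norm t" by (rule Cauchy_Schwarz_ineq2)
  also have "\<dots> \<le> norm x * R" using assms(3)[OF t(1)] by (simp add: mult_left_mono)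
  finally show ?thesis using t by (simp add: mult.commute)
qed

lemma sf_lip:
  fixes S :: "'a::euclidean_space set"
  assumes "compact S" "S \<noteq> {}" "\<And>t. t \<in> S \<Longrightarrow> norm t \<le> R"
  shows "sf S x \<le> sf S y + R * norm (x - y)"
proof -
  obtain t where t: "t \<in> S" "sf S x = x \<bullet> t"
    using sf_attained[OF assms(1,2), of x] by auto
  have "x \<bullet> t = y \<bullet> t + (x - y) \<bullet> t" by (simp add: inner_diff_left)
  also have "(x - y) \<bullet> t \<le> norm (x - y) * norm t" by (rule norm_cauchy_schwarz)
  also have "\<dots> \<le> norm (x - y) * R" using assms(3)[OF t(1)] by (simp add: mult_left_mono)
  also have "y \<bullet> t \<le> sf S y" by (rule sf_upper[OF assms(1) t(1)])
  finally show ?thesis using t by (simp add: mult.commute)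
qed

lemma sf_meas:
  fixes S :: "'a::euclidean_space set"
  assumes "compact S" "S \<noteq> {}" "\<And>t. t \<in> S \<Longrightarrow> norm t \<le> R"
  shows "sf S \<in> borel_measurable borel"
proof -
  have R0: "0 \<le> R" using assms(2,3) norm_ge_zero order_trans by blast
  have "R-lipschitz_on UNIV (sf S)"
  proof (rule lipschitz_onI)
    fix x y :: 'a
    have "sf S x \<le> sf S y + R * norm (x - y)" "sf S y \<le> sf S x + R * norm (y - x)"
      using sf_lip[OF assms] by auto
    then show "dist (sf S x) (sf S y) \<le> R * dist x y"
      by (simp add: dist_real_def dist_norm norm_minus_commute abs_le_iff)
  qed (rule R0)
  then show ?thesis
    by (intro borel_measurable_continuous_onI lipschitz_on_continuous_on)
qed

lemma sf_integrable:
  fixes S :: "'a::euclidean_space set"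
  assumes "compact S" "S \<noteq> {}" "\<And>t. t \<in> S \<Longrightarrow> norm t \<le> R"
  shows "integrable std_gaussian (sf S)"
proof (rule Bochner_Integration.integrable_bound[where f="\<lambda>x. R * norm x"])
  show "integrable std_gaussian (\<lambda>x::'a. R * norm x)"
    by (intro integrable_mult_right gauss_norm_integrable)
  show "sf S \<in> borel_measurable std_gaussian"
    using sf_meas[OF assms] unfolding std_gaussian_def by simp
  have R0: "0 \<le> R" using assms(2,3) norm_ge_zero order_trans by blast
  show "AE x in std_gaussian. norm (sf S x) \<le> norm (R * norm x)"
    using sf_bound[OF assms] R0 by simp
qed

lemma width_sf: "local_gauss_width K \<nu> \<epsilon> = integral\<^sup>L std_gaussian (sf (cball \<nu> \<epsilon> \<inter> K))"
  unfolding local_gauss_width_def sf_def ..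

theorem mainTheorem11:
  fixes K :: "'a::euclidean_space set" and \<epsilon> :: real
  assumes "closed K" and "convex K" and "\<epsilon> \<ge> 0"
  shows "concave_on K (\<lambda>\<nu>. local_gauss_width K \<nu> \<epsilon>)"
proof -
  have cpt: "compact (cball \<nu> \<epsilon> \<inter> K)" for \<nu> :: 'a
    by (intro compact_Int_closed compact_cball assms)
  have ne: "cball \<nu> \<epsilon> \<inter> K \<noteq> {}" if "\<nu> \<in> K" for \<nu> :: 'a
    using that assms(3) centre_in_cball[of \<nu> \<epsilon>] by blast
  have bd: "norm t \<le> norm \<nu> + \<epsilon>" if "t \<in> cball \<nu> \<epsilon> \<inter> K" for t \<nu> :: 'a
    using that norm_triangle_ineq2[of t \<nu>] by (auto simp: dist_norm norm_minus_commute)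
  have int: "integrable std_gaussian (sf (cball \<nu> \<epsilon> \<inter> K))" if "\<nu> \<in> K" for \<nu> :: 'a
    by (rule sf_integrable[OF cpt ne[OF that] bd])
  show ?thesis
    unfolding concave_on_iff
  proof (intro conjI ballI allI impI assms(2))
    fix x y :: 'a and u v :: real
    assume x: "x \<in> K" and y: "y \<in> K" and u: "0 \<le> u" and v: "0 \<le> v" and uv: "u + v = 1"
    define z where "z = u *\<^sub>R x + v *\<^sub>R y"
    have z: "z \<in> K" unfolding z_def using convexD[OF assms(2) x y u v uv] .
    have pw: "u * sf (cball x \<epsilon> \<inter> K) g + v * sf (cball y \<epsilon> \<inter> K) g \<le> sf (cball z \<epsilon> \<inter> K) g"
      for g :: 'a
    proof -
      obtain t1 where t1: "t1 \<in> cball x \<epsilon> \<inter> K" "sf (cball x \<epsilon> \<inter> K) g = g \<bullet> t1"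
        using sf_attained[OF cpt ne[OF x], of g] by auto
      obtain t2 where t2: "t2 \<in> cball y \<epsilon> \<inter> K" "sf (cball y \<epsilon> \<inter> K) g = g \<bullet> t2"
        using sf_attained[OF cpt ne[OF y], of g] by auto
      define t where "t = u *\<^sub>R t1 + v *\<^sub>R t2"
      have tK: "t \<in> K" unfolding t_def using convexD[OF assms(2), of t1 t2 u v] t1 t2 u v uv by auto
      have "dist z t = norm (u *\<^sub>R (x - t1) + v *\<^sub>R (y - t2))"
        unfolding z_def t_def dist_norm by (simp add: algebra_simps)
      also have "\<dots> \<le> u * norm (x - t1) + v * norm (y - t2)"
        using norm_triangle_ineq[of "u *\<^sub>R (x - t1)" "v *\<^sub>R (y - t2)"] u v by simp
      also have "\<dots> \<le> u * \<epsilon> + v * \<epsilon>"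
        using t1 t2 u v by (intro add_mono mult_left_mono) (auto simp: dist_norm)
      also have "\<dots> = \<epsilon>" using uv by (metis distrib_right mult_1)
      finally have "t \<in> cball z \<epsilon> \<inter> K" using tK by simp
      then have "g \<bullet> t \<le> sf (cball z \<epsilon> \<inter> K) g" by (rule sf_upper[OF cpt])
      then show ?thesis using t1 t2 unfolding t_def by (simp add: inner_add_right)
    qed
    have "u * local_gauss_width K x \<epsilon> + v * local_gauss_width K y \<epsilon>
       = (\<integral>g. u * sf (cball x \<epsilon> \<inter> K) g + v * sf (cball y \<epsilon> \<inter> K) g \<partial>std_gaussian)"
      unfolding width_sf using int[OF x] int[OF y] by simp
    also have "\<dots> \<le> local_gauss_width K z \<epsilon>"
      unfolding width_sf using int[OF x] int[OF y] int[OF z] pw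
      by (intro integral_mono) auto
    finally show "u * local_gauss_width K x \<epsilon> + v * local_gauss_width K y \<epsilon>
       \<le> local_gauss_width K (u *\<^sub>R x + v *\<^sub>R y) \<epsilon>" unfolding z_def .
  qed
qed

end
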